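(* Let $n\ge 4$, $s_k=\sin(k\pi/n)$, and let $D_1,\dots,D_{n-1}$ be positive numbers satisfying $D_kD_{l-j}\ge D_jD_{l-k}+D_lD_{k-j}$ for all integers $1\le j<k<l\le n-1$, together with $D_1=D_{n-1}=s_1$. Let $a_k=\log(D_k/s_k)$. Then $a_1=a_{n-1}=0$, and for every $k\in\{2,\dots,n-2\}$ the number $q_k=s_{k+1}s_{k-1}/s_k^2$ satisfies $0<q_k<1$ and $$a_k\ \ge\ q_k\,\frac{a_{k+1}+a_{k-1}}{2}.$$ *)

theory Defs
  imports Complex_Main
begin

end

theory Submission
  imports Defs "HOL-Analysis.Convex"
begin

lemma exp_wam: fixes q t :: real assumes "0 \<le> q" "q \<le> 1"
  shows "exp (q * t) \<le> (1 - q) + q * exp t"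
proof -
  have "exp ((1 - q) *\<^sub>R 0 + q *\<^sub>R t) \<le> (1 - q) * exp 0 + q * exp t"
    using convex_onD[OF exp_convex, of q 0 t] assms by simp
  thus ?thesis by simp
qed

lemma sin_sq_id: fixes x y :: real
  shows "sin x ^ 2 - sin (x + y) * sin (x - y) = sin y ^ 2"
proof -
  have "sin x ^ 2 - sin (x + y) * sin (x - y) = sin x ^2 * (1 - cos y ^ 2) + cos x ^ 2 * sin y ^ 2"
    by (simp add: sin_add sin_diff power2_eq_square algebra_simps)
  also have "\<dots> = sin y ^ 2" 
  proof -
    have "1 - cos y ^ 2 = sin y ^ 2" by (simp add: sin_squared_eq)
    thus ?thesis using sin_cos_squared_add[of x] by (metis distrib_right mult.commute mult_1)
  qed
  finally show ?thesis .
qed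

theorem mainTheorem11:
  fixes n :: nat and D :: "nat \<Rightarrow> real"
  assumes n4: "n \<ge> 4"
    and pos: "\<And>k. 1 \<le> k \<Longrightarrow> k \<le> n - 1 \<Longrightarrow> D k > 0"
    and ineq: "\<And>j k l. 1 \<le> j \<Longrightarrow> j < k \<Longrightarrow> k < l \<Longrightarrow> l \<le> n - 1 \<Longrightarrow>
                 D k * D (l - j) \<ge> D j * D (l - k) + D l * D (k - j)"
    and D1: "D 1 = sin (pi / real n)"
    and Dn1: "D (n - 1) = sin (pi / real n)"
  shows "(let s = (\<lambda>k::nat. sin (real k * pi / real n));
              a = (\<lambda>k. ln (D k / s k))
          in a 1 = 0 \<and> a (n - 1) = 0 \<and>
             (\<forall>k. 2 \<le> k \<and> k \<le> n - 2 \<longrightarrow>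
                (let q = s (k + 1) * s (k - 1) / (s k)\<^sup>2
                 in 0 < q \<and> q < 1 \<and> a k \<ge> q * (a (k + 1) + a (k - 1)) / 2)))"
proof -
  define s where "s = (\<lambda>k::nat. sin (real k * pi / real n))"
  define a where "a = (\<lambda>k. ln (D k / s k))"
  have npos: "real n > 0" using n4 by simp
  have spos: "s k > 0" if "1 \<le> k" "k \<le> n - 1" for k
  proof -
    have "real k < real n" using that n4 by simp
    hence "real k * pi / real n < pi" using npos by (simp add: field_simps)
    moreover have "0 < real k * pi / real n" using that npos by simp
    ultimately show ?thesis unfolding s_def by (simp add: sin_gt_zero)
  qed
  have s1: "s 1 = sin (pi / real n)" by (simp add: s_def)
  have sn1: "s (n - 1) = sin (pi / real n)"
  proof -
    have "real (n - 1) * pi / real n = pi - pi / real n" using n4 npos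
      by (simp add: of_nat_diff field_simps)
    thus ?thesis by (simp add: s_def)
  qed
  have s1pos: "s 1 > 0" using spos[of 1] n4 by simp
  have a1: "a 1 = 0" using D1 s1 s1pos by (simp add: a_def)
  have an1: "a (n - 1) = 0" using Dn1 sn1 s1pos by (simp add: a_def)
  have main: "0 < q \<and> q < 1 \<and> a k \<ge> q * (a (k + 1) + a (k - 1)) / 2"
    if k: "2 \<le> k" "k \<le> n - 2" and qd: "q = s (k + 1) * s (k - 1) / (s k)\<^sup>2" for k q
  proof -
    have sk: "s k > 0" using spos k by simp
    have skp: "s (k+1) > 0" using spos k by simp
    have skm: "s (k-1) > 0" using spos k by simp
    have Dk: "D k > 0" using pos k by simp
    have Dkp: "D (k+1) > 0" using pos k by simp
    have Dkm: "D (k-1) > 0" using pos k by simp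
    have id: "s k ^ 2 - s (k+1) * s (k-1) = s 1 ^ 2"
    proof -
      have e1: "real (k+1) * pi / real n = real k * pi / real n + pi / real n"
        by (simp add: distrib_right add_divide_distrib)
      have e2: "real (k-1) * pi / real n = real k * pi / real n - pi / real n"
        using k by (simp add: of_nat_diff field_simps)
      show ?thesis unfolding s_def e1 e2 using sin_sq_id by simp
    qed
    have "1 - q = (s k ^ 2 - s (k+1) * s (k-1)) / s k ^ 2" unfolding qd using sk
      by (simp add: diff_divide_distrib)
    hence q1: "1 - q = s 1 ^ 2 / s k ^ 2" using id by simp
    have qpos: "0 < q" unfolding qd using sk skp skm by simp
    have qlt: "q < 1" using q1 s1pos sk by (smt (verit) divide_pos_pos zero_less_power)
    have DD: "D k * D k \<ge> D 1 * D 1 + D (k+1) * D (k-1)"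
      using ineq[of 1 k "k+1"] k by simp
    define x where "x = (\<lambda>i. D i / s i)"
    have Dx: "D i = x i * s i" if "1 \<le> i" "i \<le> n - 1" for i
      using spos[OF that] by (simp add: x_def)
    have xk: "x k > 0" "x (k+1) > 0" "x (k-1) > 0"
      using Dk Dkp Dkm sk skp skm by (simp_all add: x_def)
    have "x k ^ 2 * s k ^ 2 \<ge> s 1 ^ 2 + x (k+1) * x (k-1) * (s (k+1) * s (k-1))"
      using DD Dx[of k] Dx[of "k+1"] Dx[of "k-1"] k D1 s1
      by (simp add: power2_eq_square algebra_simps)
    moreover have "(1 - q) + q * (x (k+1) * x (k-1))
       = (s 1 ^ 2 + x (k+1) * x (k-1) * (s (k+1) * s (k-1))) / s k ^ 2"
    proof -
      have "(1 - q) + q * (x (k+1) * x (k-1)) = s 1 ^ 2 / s k ^ 2 + q * (x (k+1) * x (k-1))"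
        using q1 by simp
      also have "\<dots> = (s 1 ^ 2 + x (k+1) * x (k-1) * (s (k+1) * s (k-1))) / s k ^ 2"
        unfolding qd by (simp add: add_divide_distrib mult.commute)
      finally show ?thesis .
    qed
    ultimately have X: "x k ^ 2 \<ge> (1 - q) + q * (x (k+1) * x (k-1))"
      using sk by (simp add: pos_divide_le_eq)
    define b where "b = a (k+1) + a (k-1)"
    have ax: "a i = ln (x i)" for i by (simp add: a_def x_def)
    have eb: "exp b = x (k+1) * x (k-1)" unfolding b_def ax using xk
      by (simp add: exp_add)
    have "exp (q * b) \<le> x k ^ 2" using exp_wam[of q b] qpos qlt X eb by simp
    hence "q * b \<le> ln (x k ^ 2)" using xk by (simp add: ln_ge_iff)
    also have "\<dots> = 2 * a k" using xk by (simp add: ax ln_realpow)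
    finally show ?thesis using qpos qlt by (simp add: b_def)
  qed
  have "a 1 = 0 \<and> a (n - 1) = 0 \<and>
             (\<forall>k. 2 \<le> k \<and> k \<le> n - 2 \<longrightarrow>
                (let q = s (k + 1) * s (k - 1) / (s k)\<^sup>2
                 in 0 < q \<and> q < 1 \<and> a k \<ge> q * (a (k + 1) + a (k - 1)) / 2))"
    unfolding Let_def using a1 an1 main[OF _ _ refl] by blast
  thus ?thesis unfolding s_def a_def Let_def .
qed

end
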